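(* Fix integers $2\le k\le n$, let $M=\lceil n/k\rceil$ and $r=n-(M-1)k$, and consider the $k$-grouped $(k,n)$ random-grid sharing of a secret bit described in the context. Let $\vec\lambda=(\lambda_1,\ldots,\lambda_M)$ be a valid partition and suppose $\lambda_j$ shadow images are selected from the $j$-th group for each $j$. Let $x$ be an integer with $\lambda_M\le x\le k$ and let $B\in\{0,1\}^{1\times x}$ be any row vector of Hamming weight $\lambda_M$. Then $$\Pr(\#C(\vec\lambda)=x)=\frac{\binom{k-\lambda_M}{x-\lambda_M}\,\bigl|\mathcal{E}^{\vec\lambda}_x(B)\bigr|}{\prod_{j=1}^{M-1}\binom{k}{\lambda_j}}.$$
   Context: Sharing of a secret bit $s$: $b_1,\ldots,b_{k-1}$ are independent uniform bits and $b_k=s\oplus b_1\oplus\cdots\oplus b_{k-1}$. The $n$ shares form $M$ groups; groups $1,\ldots,M-1$ have $k$ positions and group $M$ has $r$ positions. Group 1 is $(b_1,\ldots,b_k)$ (position $\delta$ carries index $\delta$). For each $j\ge2$ an independent uniformly random permutation $\sigma_j$ of $\{1,\ldots,k\}$ is drawn and position $\delta$ of group $j$ carries index $\sigma_j(\delta)$ and bit $b_{\sigma_j(\delta)}$ ($\delta\le r$ for group $M$); it is the pixel of shadow image $(j-1)k+\delta$. A valid partition is $\vec\lambda=(\lambda_1,\ldots,\lambda_M)$ of non-negative integers with $\max_j\lambda_j\le k$ and $\lambda_M\le r$. Selecting $\lambda_j$ (fixed) positions of group $j$, $C(\vec\lambda)$ is the multiset of carried indices and $\#C(\vec\lambda)$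 the number of its distinct elements; probabilities are over the random permutations. $\mathcal{E}^{\vec\lambda}_x(B)$ is the set of $M\times x$ matrices $E$ with entries in $\{0,1\}$ whose last row equals $B$, whose $i$-th row sum is $\lambda_i$ for every $i=1,\ldots,M$, and each of whose column sums is at least $1$. *)

theory Defs
  imports "HOL-Probability.Probability" "HOL-Combinatorics.Permutations"
begin

text \<open>Random data of the scheme: for each group j in {2..M} an independent uniformly
  random permutation sigma j of {1..k}; outside {2..M} the component is fixed to id
  (so that the sample space is a finite set and the uniform distribution on it is the
  product of independent uniform permutations).\<close>
definition perm_tuples :: "nat \<Rightarrow> nat \<Rightarrow> (nat \<Rightarrow> nat \<Rightarrow> nat) set" where
  "perm_tuples k M = {\<sigma>. (\<forall>j\<in>{2..M}. \<sigma> j permutes {1..k}) \<and> (\<forall>j. j \<notin> {2..M} \<longrightarrow> \<sigma> j = id)}"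

definition carried :: "(nat \<Rightarrow> nat \<Rightarrow> nat) \<Rightarrow> nat \<Rightarrow> nat \<Rightarrow> nat" where
  "carried \<sigma> j \<delta> = (if j = 1 then \<delta> else \<sigma> j \<delta>)"

definition numC :: "(nat \<Rightarrow> nat \<Rightarrow> nat) \<Rightarrow> nat \<Rightarrow> (nat \<Rightarrow> nat set) \<Rightarrow> nat" where
  "numC \<sigma> M S = card (\<Union>j\<in>{1..M}. carried \<sigma> j ` S j)"

definition prob_numC :: "nat \<Rightarrow> nat \<Rightarrow> (nat \<Rightarrow> nat set) \<Rightarrow> nat \<Rightarrow> real" where
  "prob_numC k M S x =
     measure_pmf.prob (pmf_of_set (perm_tuples k M)) {\<sigma>. numC \<sigma> M S = x}"

definition Emats :: "nat \<Rightarrow> nat \<Rightarrow> (nat \<Rightarrow> nat) \<Rightarrow> (nat \<Rightarrow> nat) \<Rightarrow> (nat \<Rightarrow> nat \<Rightarrow> nat) set" where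
  "Emats M x lam B = {E.
      (\<forall>i j. E i j \<in> {0, 1}) \<and>
      (\<forall>i j. (i \<notin> {1..M} \<or> j \<notin> {1..x}) \<longrightarrow> E i j = 0) \<and>
      (\<forall>j\<in>{1..x}. E M j = B j) \<and>
      (\<forall>i\<in>{1..M}. (\<Sum>j=1..x. E i j) = lam i) \<and>
      (\<forall>j\<in>{1..x}. (\<Sum>i=1..M. E i j) \<ge> 1)}"

end

theory Submission
  imports Defs
begin

lemma sum01:
  assumes "finite A" "\<forall>j\<in>A. f j \<in> {0,1::nat}"
  shows "sum f A = card {j\<in>A. f j = 1}"
proof -
  have "sum f A = sum (\<lambda>j. if f j = 1 then 1 else 0) A"
    by (rule sum.cong) (use assms in auto)
  then show ?thesis using assms(1) by (simp add: sum.If_cases Int_def)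
qed

lemma ex_bij_fix:
  assumes "finite V" "finite V'" "F \<subseteq> V" "F' \<subseteq> V'" "card V = card V'" "card F = card F'"
  shows "\<exists>h. bij_betw h V V' \<and> h ` F = F'"
proof -
  have fF: "finite F" "finite F'" using assms finite_subset by auto
  obtain f where f: "bij_betw f F F'" using finite_same_card_bij[OF fF assms(6)] by blast
  have "card (V - F) = card (V' - F')" using assms fF by (simp add: card_Diff_subset)
  then obtain g where g: "bij_betw g (V - F) (V' - F')"
    using finite_same_card_bij assms by (meson finite_Diff)
  define h where "h x = (if x \<in> F then f x else g x)" for x
  have 1: "bij_betw h F F'" using f by (rule bij_betw_cong[THEN iffD1, rotated]) (simp add: h_def)
  have 2: "bij_betw h (V - F) (V' - F')" using g by (rule bij_betw_cong[THEN iffD1, rotated]) (simp add: h_def)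
  have "bij_betw h (F \<union> (V - F)) (F' \<union> (V' - F'))" by (rule bij_betw_combine[OF 1 2]) auto
  moreover have "F \<union> (V - F) = V" "F' \<union> (V' - F') = V'" using assms by auto
  ultimately show ?thesis using 1 by (metis bij_betw_imp_surj_on)
qed

definition cov :: "'a set \<Rightarrow> 'a set \<Rightarrow> nat set \<Rightarrow> (nat \<Rightarrow> nat) \<Rightarrow> (nat \<Rightarrow> 'a set) set" where
  "cov V F I lam = {R \<in> PiE_dflt I {} (\<lambda>i. {T. T \<subseteq> V \<and> card T = lam i}). F \<union> \<Union>(R ` I) = V}"

lemma finite_cov: "finite I \<Longrightarrow> finite V \<Longrightarrow> finite (cov V F I lam)"
  unfolding cov_def
  by (rule finite_subset[where B = "PiE_dflt I {} (\<lambda>i. Pow V)", OF _ finite_PiE_dflt])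
     (auto simp: PiE_dflt_def)

lemma cov_le:
  assumes "bij_betw h V V'" "F \<subseteq> V" "h ` F = F'" "finite V'" "finite I"
  shows "card (cov V F I lam) \<le> card (cov V' F' I lam)"
proof (rule card_inj_on_le)
  show "finite (cov V' F' I lam)" using finite_cov assms by blast
  have inj: "inj_on h V" using assms(1) bij_betw_def by blast
  show "(\<lambda>R i. h ` R i) ` cov V F I lam \<subseteq> cov V' F' I lam"
  proof
    fix R' assume "R' \<in> (\<lambda>R i. h ` R i) ` cov V F I lam"
    then obtain R where R: "R \<in> cov V F I lam" and R': "R' = (\<lambda>i. h ` R i)" by blast
    have a: "\<forall>i\<in>I. R i \<subseteq> V \<and> card (R i) = lam i" "\<forall>i. i \<notin> I \<longrightarrow> R i = {}"
      "F \<union> \<Union>(R ` I) = V" using R by (auto simp: cov_def PiE_dflt_def)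
    have "\<forall>i\<in>I. card (h ` R i) = lam i" using a inj by (metis card_image inj_on_subset)
    moreover have "\<forall>i\<in>I. h ` R i \<subseteq> V'" using a assms(1) bij_betw_imp_surj_on by blast
    moreover have "F' \<union> \<Union>((\<lambda>i. h ` R i) ` I) = V'"
    proof -
      have "h ` (F \<union> \<Union>(R ` I)) = V'" using a(3) assms(1) bij_betw_imp_surj_on by blast
      then show ?thesis using assms(3) by (simp add: image_Un image_UN)
    qed
    ultimately show "R' \<in> cov V' F' I lam" using a(2) unfolding R' cov_def PiE_dflt_def by auto
  qed
  show "inj_on (\<lambda>R i. h ` R i) (cov V F I lam)"
  proof (rule inj_onI)
    fix R1 R2 assume R: "R1 \<in> cov V F I lam" "R2 \<in> cov V F I lam" and e: "(\<lambda>i. h ` R1 i) = (\<lambda>i. h ` R2 i)"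
    show "R1 = R2"
    proof
      fix i
      have "h ` R1 i = h ` R2 i" using e by meson
      moreover have "R1 i \<subseteq> V" "R2 i \<subseteq> V" using R by (auto simp: cov_def PiE_dflt_def split: if_splits)
      ultimately show "R1 i = R2 i" using inj inj_on_image_eq_iff by metis
    qed
  qed
qed

lemma cov_eq:
  assumes "finite V" "finite V'" "F \<subseteq> V" "F' \<subseteq> V'" "card V = card V'" "card F = card F'" "finite I"
  shows "card (cov V F I lam) = card (cov V' F' I lam)"
proof -
  obtain h where h: "bij_betw h V V'" "h ` F = F'" using ex_bij_fix assms by metis
  have 1: "card (cov V F I lam) \<le> card (cov V' F' I lam)" using cov_le h assms by metis
  have "bij_betw (inv_into V h) V' V" using h(1) bij_betw_inv_into by blast
  moreover have "inv_into V h ` F' = F" using h assms(3) bij_betw_def inv_into_image_cancel by metis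
  ultimately have 2: "card (cov V' F' I lam) \<le> card (cov V F I lam)" using cov_le assms by metis
  show ?thesis using 1 2 by simp
qed

lemma cov_split:
  assumes "finite V" "finite I" "i0 \<in> I" "V0 \<subseteq> V" "card V0 = lam i0"
  shows "card (cov V {} I lam) = card {R0. R0 \<subseteq> V \<and> card R0 = lam i0} * card (cov V V0 (I-{i0}) lam)"
proof -
  let ?Rs = "{R0. R0 \<subseteq> V \<and> card R0 = lam i0}"
  have eq: "cov V {} I lam = (\<Union>R0\<in>?Rs. (\<lambda>R. R(i0:=R0)) ` cov V R0 (I-{i0}) lam)"
  proof
    show "cov V {} I lam \<subseteq> (\<Union>R0\<in>?Rs. (\<lambda>R. R(i0:=R0)) ` cov V R0 (I-{i0}) lam)"
    proof
      fix R assume R: "R \<in> cov V {} I lam"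
      have a: "\<forall>i\<in>I. R i \<subseteq> V \<and> card (R i) = lam i" "\<forall>i. i \<notin> I \<longrightarrow> R i = {}"
        "\<Union>(R ` I) = V" using R by (auto simp: cov_def PiE_dflt_def)
      have "I = insert i0 (I - {i0})" using assms by auto
      then have "\<Union>(R ` I) = R i0 \<union> \<Union>((R(i0:={})) ` (I-{i0}))" by auto
      then have "R(i0:={}) \<in> cov V (R i0) (I-{i0}) lam" using a by (auto simp: cov_def PiE_dflt_def)
      moreover have "R = (R(i0:={}))(i0 := R i0)" by simp
      moreover have "R i0 \<in> ?Rs" using a assms by auto
      ultimately show "R \<in> (\<Union>R0\<in>?Rs. (\<lambda>R. R(i0:=R0)) ` cov V R0 (I-{i0}) lam)" by blast
    qed
    show "(\<Union>R0\<in>?Rs. (\<lambda>R. R(i0:=R0)) ` cov V R0 (I-{i0}) lam) \<subseteq> cov V {} I lam"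
    proof clarify
      fix R0 R assume R0: "R0 \<subseteq> V" "card R0 = lam i0" and R: "R \<in> cov V R0 (I-{i0}) lam"
      have a: "\<forall>i\<in>I-{i0}. R i \<subseteq> V \<and> card (R i) = lam i" "\<forall>i. i \<notin> I-{i0} \<longrightarrow> R i = {}"
        "R0 \<union> \<Union>(R ` (I-{i0})) = V" using R by (auto simp: cov_def PiE_dflt_def)
      have "I = insert i0 (I - {i0})" using assms by auto
      then have "\<Union>((R(i0:=R0)) ` I) = R0 \<union> \<Union>(R ` (I-{i0}))" by auto
      then show "R(i0:=R0) \<in> cov V {} I lam" using a R0 assms(3) by (auto simp: cov_def PiE_dflt_def)
    qed
  qed
  have "card (cov V {} I lam) = (\<Sum>R0\<in>?Rs. card ((\<lambda>R. R(i0:=R0)) ` cov V R0 (I-{i0}) lam))"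
    unfolding eq
  proof (rule card_UN_disjoint)
    show "finite ?Rs" using assms(1) by simp
    show "\<forall>R0\<in>?Rs. finite ((\<lambda>R. R(i0:=R0)) ` cov V R0 (I-{i0}) lam)"
      using finite_cov assms by blast
    show "\<forall>R0\<in>?Rs. \<forall>R1\<in>?Rs. R0 \<noteq> R1 \<longrightarrow> ((\<lambda>R. R(i0:=R0)) ` cov V R0 (I-{i0}) lam) \<inter>
        ((\<lambda>R. R(i0:=R1)) ` cov V R1 (I-{i0}) lam) = {}"
      by (auto simp: image_iff) (metis fun_upd_same)+
  qed
  also have "\<dots> = (\<Sum>R0\<in>?Rs. card (cov V V0 (I-{i0}) lam))"
  proof (rule sum.cong[OF refl])
    fix R0 assume R0: "R0 \<in> ?Rs"
    have "inj_on (\<lambda>R. R(i0:=R0)) (cov V R0 (I-{i0}) lam)"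
    proof (rule inj_onI)
      fix R1 R2 assume "R1 \<in> cov V R0 (I-{i0}) lam" "R2 \<in> cov V R0 (I-{i0}) lam"
        and e: "R1(i0 := R0) = R2(i0 := R0)"
      then have "R1 i0 = {}" "R2 i0 = {}" by (auto simp: cov_def PiE_dflt_def)
      with e show "R1 = R2" by (metis fun_upd_triv fun_upd_upd)
    qed
    then have "card ((\<lambda>R. R(i0:=R0)) ` cov V R0 (I-{i0}) lam) = card (cov V R0 (I-{i0}) lam)"
      by (rule card_image)
    also have "\<dots> = card (cov V V0 (I-{i0}) lam)"
      using R0 assms by (intro cov_eq) auto
    finally show "card ((\<lambda>R. R(i0:=R0)) ` cov V R0 (I-{i0}) lam) = card (cov V V0 (I-{i0}) lam)" .
  qed
  also have "\<dots> = card ?Rs * card (cov V V0 (I-{i0}) lam)" by simp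
  finally show ?thesis .
qed

lemma card_supsets:
  assumes "finite U" "S1 \<subseteq> U" "card S1 \<le> x"
  shows "card {W. S1 \<subseteq> W \<and> W \<subseteq> U \<and> card W = x} = (card U - card S1) choose (x - card S1)"
proof -
  have fS: "finite S1" using assms finite_subset by blast
  have "bij_betw (\<lambda>W. W - S1) {W. S1 \<subseteq> W \<and> W \<subseteq> U \<and> card W = x} {D. D \<subseteq> U - S1 \<and> card D = x - card S1}"
  proof (rule bij_betw_byWitness[where f' = "\<lambda>D. D \<union> S1"])
    show "\<forall>a\<in>{W. S1 \<subseteq> W \<and> W \<subseteq> U \<and> card W = x}. a - S1 \<union> S1 = a" by auto
    show "\<forall>a'\<in>{D. D \<subseteq> U - S1 \<and> card D = x - card S1}. a' \<union> S1 - S1 = a'" by auto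
    show "(\<lambda>W. W - S1) ` {W. S1 \<subseteq> W \<and> W \<subseteq> U \<and> card W = x} \<subseteq> {D. D \<subseteq> U - S1 \<and> card D = x - card S1}"
      using assms fS by (auto simp: card_Diff_subset intro: finite_subset)
    show "(\<lambda>D. D \<union> S1) ` {D. D \<subseteq> U - S1 \<and> card D = x - card S1} \<subseteq> {W. S1 \<subseteq> W \<and> W \<subseteq> U \<and> card W = x}"
    proof clarify
      fix D assume D: "D \<subseteq> U - S1" "card D = x - card S1"
      have "finite D" using D assms finite_subset by blast
      then have "card (D \<union> S1) = card D + card S1" using D fS by (subst card_Un_disjoint) auto
      then show "S1 \<subseteq> D \<union> S1 \<and> D \<union> S1 \<subseteq> U \<and> card (D \<union> S1) = x" using D assms by auto
    qed
  qed
  then have "card {W. S1 \<subseteq> W \<and> W \<subseteq> U \<and> card W = x} = card {D. D \<subseteq> U - S1 \<and> card D = x - card S1}"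
    by (rule bij_betw_same_card)
  also have "\<dots> = (card U - card S1) choose (x - card S1)"
    using assms by (simp add: n_subsets card_Diff_subset fS)
  finally show ?thesis .
qed

lemma cov_union:
  assumes "finite U" "S1 \<subseteq> U" "finite I" "finite V0" "F0 \<subseteq> V0" "card V0 = x" "card F0 = card S1"
  shows "card {T\<in>PiE_dflt I {} (\<lambda>j. {T. T \<subseteq> U \<and> card T = lam j}). card (S1 \<union> \<Union>(T`I)) = x}
     = card {W. S1 \<subseteq> W \<and> W \<subseteq> U \<and> card W = x} * card (cov V0 F0 I lam)"
proof -
  let ?Ws = "{W. S1 \<subseteq> W \<and> W \<subseteq> U \<and> card W = x}"
  have eq: "{T\<in>PiE_dflt I {} (\<lambda>j. {T. T \<subseteq> U \<and> card T = lam j}). card (S1 \<union> \<Union>(T`I)) = x}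
     = (\<Union>W\<in>?Ws. cov W S1 I lam)"
  proof
    show "{T\<in>PiE_dflt I {} (\<lambda>j. {T. T \<subseteq> U \<and> card T = lam j}). card (S1 \<union> \<Union>(T`I)) = x}
      \<subseteq> (\<Union>W\<in>?Ws. cov W S1 I lam)"
    proof (rule subsetI)
      fix T assume "T \<in> {T\<in>PiE_dflt I {} (\<lambda>j. {T. T \<subseteq> U \<and> card T = lam j}). card (S1 \<union> \<Union>(T`I)) = x}"
      then have T: "T \<in> PiE_dflt I {} (\<lambda>j. {T. T \<subseteq> U \<and> card T = lam j})" "card (S1 \<union> \<Union>(T`I)) = x" by auto
      have "S1 \<union> \<Union>(T`I) \<in> ?Ws" using T assms by (auto simp: PiE_dflt_def)
      moreover have "T \<in> cov (S1 \<union> \<Union>(T`I)) S1 I lam" using T by (auto simp: PiE_dflt_def cov_def)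
      ultimately show "T \<in> (\<Union>W\<in>?Ws. cov W S1 I lam)" by blast
    qed
    show "(\<Union>W\<in>?Ws. cov W S1 I lam) \<subseteq>
      {T\<in>PiE_dflt I {} (\<lambda>j. {T. T \<subseteq> U \<and> card T = lam j}). card (S1 \<union> \<Union>(T`I)) = x}"
      by (auto simp: PiE_dflt_def cov_def)
  qed
  have "card (\<Union>W\<in>?Ws. cov W S1 I lam) = (\<Sum>W\<in>?Ws. card (cov W S1 I lam))"
  proof (rule card_UN_disjoint)
    show "finite ?Ws" using assms(1) by (rule finite_subset[rotated, OF finite_Pow_iff[THEN iffD2]]) auto
    show "\<forall>W\<in>?Ws. finite (cov W S1 I lam)" using assms finite_cov finite_subset by (metis (mono_tags) mem_Collect_eq)
    show "\<forall>W\<in>?Ws. \<forall>W'\<in>?Ws. W \<noteq> W' \<longrightarrow> cov W S1 I lam \<inter> cov W' S1 I lam = {}"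
      by (auto simp: cov_def)
  qed
  also have "\<dots> = (\<Sum>W\<in>?Ws. card (cov V0 F0 I lam))"
  proof (rule sum.cong[OF refl])
    fix W assume W: "W \<in> ?Ws"
    then have "finite W" using assms finite_subset by blast
    then show "card (cov W S1 I lam) = card (cov V0 F0 I lam)"
      using W assms by (intro cov_eq) auto
  qed
  finally show ?thesis using eq by simp
qed



lemma Emats_cov:
  assumes M: "M \<ge> 1" and B01: "\<forall>j\<in>{1..x}. B j \<in> {0, 1}" and Bs: "(\<Sum>j=1..x. B j) = lam M"
  shows "card (Emats M x lam B) = card (cov {1..x} {j\<in>{1..x}. B j = 1} {1..M-1} lam)"
proof -
  let ?Bs = "{j\<in>{1..x}. B j = 1}"
  define \<phi> where "\<phi> E = (\<lambda>i. if i \<in> {1..M-1} then {j\<in>{1..x}. E i j = (1::nat)} else {})" for E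
  define \<psi> where "\<psi> R = (\<lambda>i j. if i \<in> {1..M-1} \<and> j \<in> {1..x} \<and> j \<in> R i then 1
       else if i = M \<and> j \<in> {1..x} then B j else (0::nat))" for R
  have "bij_betw \<phi> (Emats M x lam B) (cov {1..x} ?Bs {1..M-1} lam)"
  proof (rule bij_betw_byWitness[where f' = \<psi>])
    show "\<forall>E\<in>Emats M x lam B. \<psi> (\<phi> E) = E"
    proof
      fix E assume E: "E \<in> Emats M x lam B"
      show "\<psi> (\<phi> E) = E"
      proof (intro ext)
        fix i j
        have "E i j \<in> {0,1}" using E by (simp add: Emats_def)
        moreover have "i \<notin> {1..M} \<or> j \<notin> {1..x} \<Longrightarrow> E i j = 0" using E by (simp add: Emats_def)
        moreover have "j \<in> {1..x} \<Longrightarrow> E M j = B j" using E by (simp add: Emats_def)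
        ultimately show "\<psi> (\<phi> E) i j = E i j" unfolding \<psi>_def \<phi>_def
          by (cases "i = M"; cases "i \<in> {1..M}"; cases "j \<in> {1..x}"; auto)
      qed
    qed
    show "\<forall>R\<in>cov {1..x} ?Bs {1..M-1} lam. \<phi> (\<psi> R) = R"
    proof
      fix R assume R: "R \<in> cov {1..x} ?Bs {1..M-1} lam"
      then have a: "\<forall>i\<in>{1..M-1}. R i \<subseteq> {1..x}" "\<forall>i. i \<notin> {1..M-1} \<longrightarrow> R i = {}"
        by (auto simp: cov_def PiE_dflt_def)
      show "\<phi> (\<psi> R) = R"
      proof
        fix i show "\<phi> (\<psi> R) i = R i"
        proof (cases "i \<in> {1..M-1}")
          case True
          then have "R i \<subseteq> {1..x}" using a by blast
          then show ?thesis using True unfolding \<phi>_def \<psi>_def by auto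
        next
          case False
          then have "R i = {}" using a by blast
          then show ?thesis unfolding \<phi>_def by (subst if_not_P[OF False]) simp
        qed
      qed
    qed
    show "\<phi> ` Emats M x lam B \<subseteq> cov {1..x} ?Bs {1..M-1} lam"
    proof clarify
      fix E assume E: "E \<in> Emats M x lam B"
      have e01: "\<forall>i j. E i j \<in> {0,1}" and e0: "\<forall>i j. (i \<notin> {1..M} \<or> j \<notin> {1..x}) \<longrightarrow> E i j = 0"
        and eM: "\<forall>j\<in>{1..x}. E M j = B j" and rs: "\<forall>i\<in>{1..M}. (\<Sum>j=1..x. E i j) = lam i"
        and cs: "\<forall>j\<in>{1..x}. (\<Sum>i=1..M. E i j) \<ge> 1" using E by (auto simp: Emats_def)
      have "\<forall>i\<in>{1..M-1}. card {j\<in>{1..x}. E i j = 1} = lam i"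
      proof
        fix i assume i: "i \<in> {1..M-1}"
        have "card {j\<in>{1..x}. E i j = 1} = (\<Sum>j=1..x. E i j)"
          using e01 by (intro sum01[symmetric]) auto
        also have "\<dots> = lam i" using rs i by auto
        finally show "card {j\<in>{1..x}. E i j = 1} = lam i" .
      qed
      moreover have "?Bs \<union> \<Union>(\<phi> E ` {1..M-1}) = {1..x}"
      proof
        show "?Bs \<union> \<Union>(\<phi> E ` {1..M-1}) \<subseteq> {1..x}" by (auto simp: \<phi>_def)
        show "{1..x} \<subseteq> ?Bs \<union> \<Union>(\<phi> E ` {1..M-1})"
        proof
          fix j assume j: "j \<in> {1..x}"
          have "\<exists>i\<in>{1..M}. E i j \<noteq> 0"
          proof (rule ccontr)
            assume "\<not> ?thesis"
            then have "(\<Sum>i=1..M. E i j) = 0" by simp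
            moreover have "(\<Sum>i=1..M. E i j) \<ge> 1" using cs j by blast
            ultimately show False by simp
          qed
          then obtain i where i: "i \<in> {1..M}" "E i j = 1" using e01 by (metis insertE singletonD)
          show "j \<in> ?Bs \<union> \<Union>(\<phi> E ` {1..M-1})"
          proof (cases "i = M")
            case True then show ?thesis using i j eM by auto
          next
            case False
            then have "i \<in> {1..M-1}" using i by auto
            then show ?thesis using i j unfolding \<phi>_def by auto
          qed
        qed
      qed
      ultimately show "\<phi> E \<in> cov {1..x} ?Bs {1..M-1} lam"
        unfolding cov_def PiE_dflt_def by (auto simp: \<phi>_def)
    qed
    show "\<psi> ` cov {1..x} ?Bs {1..M-1} lam \<subseteq> Emats M x lam B"
    proof clarify
      fix R assume R: "R \<in> cov {1..x} ?Bs {1..M-1} lam"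
      then have a: "\<forall>i\<in>{1..M-1}. R i \<subseteq> {1..x} \<and> card (R i) = lam i" "\<forall>i. i \<notin> {1..M-1} \<longrightarrow> R i = {}"
        "?Bs \<union> \<Union>(R ` {1..M-1}) = {1..x}"
        by (auto simp: cov_def PiE_dflt_def)
      have p01: "\<forall>i j. \<psi> R i j \<in> {0,1}" using B01 by (auto simp: \<psi>_def)
      have p0: "\<forall>i j. (i \<notin> {1..M} \<or> j \<notin> {1..x}) \<longrightarrow> \<psi> R i j = 0" using M by (auto simp: \<psi>_def)
      have pM: "\<forall>j\<in>{1..x}. \<psi> R M j = B j" by (auto simp: \<psi>_def)
      have prs: "\<forall>i\<in>{1..M}. (\<Sum>j=1..x. \<psi> R i j) = lam i"
      proof
        fix i assume i: "i \<in> {1..M}"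
        show "(\<Sum>j=1..x. \<psi> R i j) = lam i"
        proof (cases "i = M")
          case True
          then have "(\<Sum>j=1..x. \<psi> R i j) = (\<Sum>j=1..x. B j)" using pM by simp
          then show ?thesis using Bs True by simp
        next
          case False
          then have i': "i \<in> {1..M-1}" using i by auto
          have "(\<Sum>j=1..x. \<psi> R i j) = card {j\<in>{1..x}. \<psi> R i j = 1}"
            using p01 by (intro sum01) auto
          also have "{j\<in>{1..x}. \<psi> R i j = 1} = R i" using a i' by (auto simp: \<psi>_def)
          finally show ?thesis using a i' by auto
        qed
      qed
      have pcs: "\<forall>j\<in>{1..x}. (\<Sum>i=1..M. \<psi> R i j) \<ge> 1"
      proof
        fix j assume j: "j \<in> {1..x}"
        then obtain i where i: "i \<in> {1..M}" "\<psi> R i j = 1"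
        proof (cases "j \<in> ?Bs")
          case True
          then show ?thesis using that[of M] M pM by auto
        next
          case False
          then obtain i where "i \<in> {1..M-1}" "j \<in> R i" using a(3) j by blast
          then show ?thesis using that[of i] j by (auto simp: \<psi>_def)
        qed
        have "\<psi> R i j \<le> (\<Sum>i=1..M. \<psi> R i j)" by (rule member_le_sum) (use i in auto)
        then show "(\<Sum>i=1..M. \<psi> R i j) \<ge> 1" using i by simp
      qed
      show "\<psi> R \<in> Emats M x lam B" unfolding Emats_def using p01 p0 pM prs pcs by blast
    qed
  qed
  then show ?thesis by (rule bij_betw_same_card)
qed



lemma ex_perm_map:
  assumes "finite U" "T \<subseteq> U" "T' \<subseteq> U" "card T = card T'"
  shows "\<exists>g. g permutes U \<and> g ` T = T'"
proof -
  obtain h where h: "bij_betw h U U" "h ` T = T'" using ex_bij_fix[of U U T T'] assms by auto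
  define g where "g x = (if x \<in> U then h x else x)" for x
  have "bij_betw g U U" using h(1) by (rule bij_betw_cong[THEN iffD1, rotated]) (simp add: g_def)
  then have "g permutes U" by (rule bij_imp_permutes) (simp add: g_def)
  moreover have "g ` T = T'" using h(2) assms(2) by (auto simp: g_def image_def)
  ultimately show ?thesis by blast
qed

locale fib_setup =
  fixes U :: "'a set" and I :: "nat set" and S :: "nat \<Rightarrow> 'a set" and lam :: "nat \<Rightarrow> nat"
  assumes fU: "finite U" and fI: "finite I" and SU: "\<forall>j\<in>I. S j \<subseteq> U \<and> card (S j) = lam j"
begin

definition "PT = PiE_dflt I id (\<lambda>_. {p. p permutes U})"
definition "TT = PiE_dflt I {} (\<lambda>j. {T. T \<subseteq> U \<and> card T = lam j})"
definition "\<Phi> \<sigma> = (\<lambda>j. if j \<in> I then \<sigma> j ` S j else {})"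
definition "fib T = {\<sigma>\<in>PT. \<Phi> \<sigma> = T}"

lemma finPT: "finite PT"
  unfolding PT_def by (rule finite_PiE_dflt) (auto intro: fI finite_permutations fU)

lemma PhiTT: "\<sigma> \<in> PT \<Longrightarrow> \<Phi> \<sigma> \<in> TT"
proof -
  assume s: "\<sigma> \<in> PT"
  have "\<forall>j\<in>I. \<sigma> j ` S j \<subseteq> U \<and> card (\<sigma> j ` S j) = lam j"
  proof
    fix j assume j: "j \<in> I"
    then have p: "\<sigma> j permutes U" using s by (auto simp: PT_def PiE_dflt_def)
    have "\<sigma> j ` S j \<subseteq> \<sigma> j ` U" using SU j by auto
    also have "\<dots> = U" using p by (rule permutes_image)
    finally show "\<sigma> j ` S j \<subseteq> U \<and> card (\<sigma> j ` S j) = lam j"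
      using SU j p by (metis card_image permutes_inj inj_on_subset subset_UNIV)
  qed
  then show ?thesis by (auto simp: TT_def PiE_dflt_def \<Phi>_def)
qed

lemma fib_le:
  assumes T: "T \<in> TT" and T': "T' \<in> TT"
  shows "card (fib T) \<le> card (fib T')"
proof -
  have "\<forall>j\<in>I. \<exists>g. g permutes U \<and> g ` T j = T' j"
  proof
    fix j assume j: "j \<in> I"
    then show "\<exists>g. g permutes U \<and> g ` T j = T' j"
      using T T' by (intro ex_perm_map fU) (auto simp: TT_def PiE_dflt_def)
  qed
  then obtain g where g: "\<forall>j\<in>I. g j permutes U \<and> g j ` T j = T' j" by metis
  define \<psi> where "\<psi> \<sigma> = (\<lambda>j. if j \<in> I then g j \<circ> \<sigma> j else id)" for \<sigma>
  show ?thesis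
  proof (rule card_inj_on_le)
    show "finite (fib T')" unfolding fib_def using finPT by simp
    show "\<psi> ` fib T \<subseteq> fib T'"
    proof clarify
      fix \<sigma> assume s: "\<sigma> \<in> fib T"
      then have sp: "\<forall>j\<in>I. \<sigma> j permutes U" "\<forall>j. j \<notin> I \<longrightarrow> \<sigma> j = id" and sT: "\<Phi> \<sigma> = T"
        by (auto simp: fib_def PT_def PiE_dflt_def)
      have "\<psi> \<sigma> \<in> PT" using sp g by (auto simp: PT_def PiE_dflt_def \<psi>_def intro: permutes_compose)
      moreover have "\<Phi> (\<psi> \<sigma>) = T'"
      proof
        fix j show "\<Phi> (\<psi> \<sigma>) j = T' j"
        proof (cases "j \<in> I")
          case True
          have "\<Phi> (\<psi> \<sigma>) j = g j ` (\<sigma> j ` S j)" using True by (simp add: \<Phi>_def \<psi>_def image_comp)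
          also have "\<sigma> j ` S j = T j" using sT True by (auto simp: \<Phi>_def dest: fun_cong[where x = j])
          finally show ?thesis using g True by simp
        next
          case False
          then show ?thesis using T' by (simp add: \<Phi>_def TT_def PiE_dflt_def)
        qed
      qed
      ultimately show "\<psi> \<sigma> \<in> fib T'" by (simp add: fib_def)
    qed
    show "inj_on \<psi> (fib T)"
    proof (rule inj_onI)
      fix \<sigma>1 \<sigma>2 assume s1: "\<sigma>1 \<in> fib T" and s2: "\<sigma>2 \<in> fib T" and e: "\<psi> \<sigma>1 = \<psi> \<sigma>2"
      show "\<sigma>1 = \<sigma>2"
      proof
        fix j show "\<sigma>1 j = \<sigma>2 j"
        proof (cases "j \<in> I")
          case True
          then have "g j \<circ> \<sigma>1 j = g j \<circ> \<sigma>2 j" using e by (metis \<psi>_def)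
          moreover have "inj (g j)" using g True permutes_inj by blast
          ultimately show ?thesis by (metis fun.inj_map_strong inj_eq)
        next
          case False
          then show ?thesis using s1 s2 by (auto simp: fib_def PT_def PiE_dflt_def)
        qed
      qed
    qed
  qed
qed

lemma sum_fib:
  "card {\<sigma>\<in>PT. P (\<Phi> \<sigma>)} = (\<Sum>T\<in>{T\<in>TT. P T}. card (fib T))"
proof -
  have eq: "{\<sigma>\<in>PT. P (\<Phi> \<sigma>)} = (\<Union>T\<in>{T\<in>TT. P T}. fib T)"
    using PhiTT by (auto simp: fib_def)
  have fTT: "finite TT" unfolding TT_def
    by (rule finite_subset[where B = "PiE_dflt I {} (\<lambda>i. Pow U)", OF _ finite_PiE_dflt])
       (auto simp: PiE_dflt_def fI fU)
  show ?thesis unfolding eq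
    by (rule card_UN_disjoint) (use fTT finPT in \<open>auto simp: fib_def\<close>)
qed

lemma count:
  "card {\<sigma>\<in>PT. P (\<Phi> \<sigma>)} * card TT = card PT * card {T\<in>TT. P T}"
proof (cases "TT = {}")
  case True
  then have "PT = {}" using PhiTT by blast
  then show ?thesis by simp
next
  case False
  then obtain T0 where T0: "T0 \<in> TT" by blast
  have c: "\<And>T. T \<in> TT \<Longrightarrow> card (fib T) = card (fib T0)"
    using fib_le T0 by (meson antisym)
  have 1: "card {\<sigma>\<in>PT. P (\<Phi> \<sigma>)} = card {T\<in>TT. P T} * card (fib T0)"
    unfolding sum_fib using c by simp
  have "card {\<sigma>\<in>PT. True} = card {T\<in>TT. True} * card (fib T0)"
    using sum_fib[of "\<lambda>_. True"] c by simp
  then have 2: "card PT = card TT * card (fib T0)" by simp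
  show ?thesis using 1 2 by simp
qed

lemma card_TT: "card TT = (\<Prod>j\<in>I. card U choose lam j)"
  unfolding TT_def by (subst card_PiE_dflt) (auto simp: fI fU n_subsets)

end



theorem lemma4:
  fixes k n M r x :: nat and lam :: "nat \<Rightarrow> nat" and S :: "nat \<Rightarrow> nat set"
    and B :: "nat \<Rightarrow> nat"
  assumes "2 \<le> k" and "k \<le> n"
    and "M = nat \<lceil>real n / real k\<rceil>" and "r = n - (M - 1) * k"
    and "\<forall>j\<in>{1..M}. lam j \<le> k" and "lam M \<le> r"
    and "\<forall>j\<in>{1..M}. S j \<subseteq> {1..(if j = M then r else k)} \<and> card (S j) = lam j"
    and "lam M \<le> x" and "x \<le> k"
    and "\<forall>j\<in>{1..x}. B j \<in> {0, 1}" and "(\<Sum>j=1..x. B j) = lam M"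
  shows "prob_numC k M S x =
           real ((k - lam M) choose (x - lam M)) * real (card (Emats M x lam B))
           / (\<Prod>j=1..M-1. real (k choose lam j))"
proof -
  note lamk = assms(5) and Sa = assms(7) and B01 = assms(10) and Bs = assms(11)
  have kpos: "real k > 0" using assms(1) by simp
  have q0: "real n / real k > 0" using assms(1,2) by simp
  have c0: "\<lceil>real n / real k\<rceil> > 0" using q0 by simp
  have RM: "real M = of_int \<lceil>real n / real k\<rceil>" using assms(3) c0 by simp
  have "real n / real k \<le> real M" unfolding RM by (rule le_of_int_ceiling)
  then have "real n \<le> real M * real k" using kpos by (simp add: divide_le_eq)
  then have "real n \<le> real (M * k)" by simp
  then have nMk: "n \<le> M * k" by (simp only: of_nat_le_iff)
  have iM: "int M = \<lceil>real n / real k\<rceil>" using assms(3) c0 by simp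
  have M1: "M \<ge> 1" using iM c0 by linarith
  obtain m where Mm: "M = Suc m" using M1 by (cases M) auto
  have rk: "r \<le> k" using assms(4) nMk unfolding Mm by simp
  define U where "U = {1..k}"
  define I where "I = {2..M}"
  have SU: "\<forall>j\<in>{1..M}. S j \<subseteq> U \<and> card (S j) = lam j"
  proof
    fix j assume j: "j \<in> {1..M}"
    have "{1..(if j = M then r else k)} \<subseteq> {1..k}" using rk by auto
    then show "S j \<subseteq> U \<and> card (S j) = lam j" using Sa j unfolding U_def by blast
  qed
  interpret F: fib_setup U I S lam
    by unfold_locales (use SU in \<open>auto simp: U_def I_def\<close>)
  have PT: "perm_tuples k M = F.PT"
    unfolding perm_tuples_def F.PT_def PiE_dflt_def by (auto simp: U_def I_def)
  define P where "P T = (card (S 1 \<union> \<Union>(T ` I)) = x)" for T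
  have num: "numC \<sigma> M S = card (S 1 \<union> \<Union>(F.\<Phi> \<sigma> ` I))" for \<sigma>
  proof -
    have ins: "{1..M} = insert 1 I" using M1 unfolding I_def by auto
    have "(\<Union>j\<in>{1..M}. carried \<sigma> j ` S j) = carried \<sigma> 1 ` S 1 \<union> (\<Union>j\<in>I. carried \<sigma> j ` S j)"
      unfolding ins by (rule UN_insert)
    also have "carried \<sigma> 1 ` S 1 = S 1" by (simp add: carried_def)
    also have "(\<Union>j\<in>I. carried \<sigma> j ` S j) = (\<Union>j\<in>I. \<sigma> j ` S j)"
      by (rule SUP_cong[OF refl]) (auto simp: carried_def I_def)
    also have "(\<Union>j\<in>I. \<sigma> j ` S j) = \<Union>(F.\<Phi> \<sigma> ` I)" by (simp add: F.\<Phi>_def)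
    finally show ?thesis by (simp add: numC_def)
  qed
  have "id permutes U" by simp
  then have "(\<lambda>_. id) \<in> F.PT" by (auto simp: F.PT_def PiE_dflt_def)
  then have PTne: "F.PT \<noteq> {}" by blast
  have "prob_numC k M S x = card (F.PT \<inter> {\<sigma>. numC \<sigma> M S = x}) / card F.PT"
    unfolding prob_numC_def PT using F.finPT PTne by (simp add: measure_pmf_of_set)
  also have "F.PT \<inter> {\<sigma>. numC \<sigma> M S = x} = {\<sigma>\<in>F.PT. P (F.\<Phi> \<sigma>)}"
    using num by (auto simp: P_def)
  finally have pr: "prob_numC k M S x = card {\<sigma>\<in>F.PT. P (F.\<Phi> \<sigma>)} / card F.PT" .
  have cPT: "card F.PT > 0" using PTne F.finPT by (simp add: card_gt_0_iff)
  have "card {\<sigma>\<in>F.PT. P (F.\<Phi> \<sigma>)} * card F.TT = card F.PT * card {T\<in>F.TT. P T}" by (rule F.count)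
  then have pr2: "prob_numC k M S x = card {T\<in>F.TT. P T} / card F.TT"
  proof -
    have "real (card {\<sigma>\<in>F.PT. P (F.\<Phi> \<sigma>)}) * real (card F.TT) = real (card F.PT) * real (card {T\<in>F.TT. P T})"
      using \<open>card {\<sigma>\<in>F.PT. P (F.\<Phi> \<sigma>)} * card F.TT = card F.PT * card {T\<in>F.TT. P T}\<close>
      by (simp flip: of_nat_mult)
    moreover have "card F.TT > 0"
      unfolding F.card_TT using lamk by (auto simp: U_def I_def intro!: prod_pos)
    ultimately show ?thesis unfolding pr using cPT
      by (subst frac_eq_eq) (simp_all add: mult.commute)
  qed
  have cTT: "card F.TT = (\<Prod>j=2..M. k choose lam j)" using F.card_TT by (simp add: U_def I_def)
  define E where "E = card (Emats M x lam B)"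
  define C' where "C' = (k - lam M) choose (x - lam M)"
  have core: "card {T\<in>F.TT. P T} * (k choose lam 1) = (k choose lam M) * C' * E"
  proof (cases "lam 1 \<le> x")
    case True
    define c1 where "c1 = card (cov {1..x} {1..lam 1} I lam)"
    have fU: "finite U" by (simp add: U_def)
    have S1: "S 1 \<subseteq> U" "card (S 1) = lam 1" using SU M1 by auto
    have "card {T\<in>F.TT. P T} = card {W. S 1 \<subseteq> W \<and> W \<subseteq> U \<and> card W = x} * c1"
      unfolding F.TT_def P_def c1_def
      by (rule cov_union) (use fU S1 True in \<open>auto simp: I_def\<close>)
    also have "card {W. S 1 \<subseteq> W \<and> W \<subseteq> U \<and> card W = x} = (k - lam 1) choose (x - lam 1)"
      using card_supsets[OF fU S1(1)] S1 True by (simp add: U_def)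
    finally have a: "card {T\<in>F.TT. P T} = ((k - lam 1) choose (x - lam 1)) * c1" .
    define N where "N = card (cov {1..x} {} {1..M} lam)"
    have N1: "N = (x choose lam 1) * c1"
    proof -
      have "N = card {R0. R0 \<subseteq> {1..x} \<and> card R0 = lam 1} * card (cov {1..x} {1..lam 1} ({1..M}-{1}) lam)"
        unfolding N_def by (rule cov_split) (use M1 True in auto)
      moreover have "{1..M} - {1} = I" unfolding I_def by auto
      moreover have "card {R0. R0 \<subseteq> {1..x} \<and> card R0 = lam 1} = x choose lam 1" by (simp add: n_subsets)
      ultimately show ?thesis by (simp add: c1_def)
    qed
    let ?Bs = "{j\<in>{1..x}. B j = 1}"
    have cBs: "card ?Bs = lam M" using sum01[of "{1..x}" B] B01 Bs by simp
    have NM: "N = (x choose lam M) * E"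
    proof -
      have "N = card {R0. R0 \<subseteq> {1..x} \<and> card R0 = lam M} * card (cov {1..x} ?Bs ({1..M} - {M}) lam)"
        unfolding N_def by (rule cov_split) (use M1 cBs in auto)
      moreover have "card {R0. R0 \<subseteq> {1..x} \<and> card R0 = lam M} = x choose lam M" by (simp add: n_subsets)
      ultimately have "N = (x choose lam M) * card (cov {1..x} ?Bs ({1..M} - {M}) lam)" by simp
      also have "{1..M} - {M} = {1..M-1}" using M1 by auto
      finally show ?thesis using Emats_cov[where M=M and x=x and B=B and lam=lam, OF M1 B01 Bs] by (simp add: E_def)
    qed
    have cm1: "(k choose x) * (x choose lam 1) = (k choose lam 1) * ((k - lam 1) choose (x - lam 1))"
      using choose_mult[of "lam 1" x k] True assms(9) by blast
    have cm2: "(k choose x) * (x choose lam M) = (k choose lam M) * C'"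
      using choose_mult[of "lam M" x k] assms(8,9) unfolding C'_def by blast
    have "card {T\<in>F.TT. P T} * (k choose lam 1) = ((k choose lam 1) * ((k - lam 1) choose (x - lam 1))) * c1"
      unfolding a by (simp only: mult.commute mult.left_commute mult.assoc)
    also have "\<dots> = ((k choose x) * (x choose lam 1)) * c1" by (simp only: cm1)
    also have "\<dots> = (k choose x) * N" by (simp only: N1 mult.assoc)
    also have "\<dots> = ((k choose x) * (x choose lam M)) * E" by (simp only: NM mult.assoc)
    also have "\<dots> = (k choose lam M) * C' * E" by (simp only: cm2)
    finally show ?thesis .
  next
    case False
    have "{T\<in>F.TT. P T} = {}"
    proof (rule ccontr)
      assume "{T\<in>F.TT. P T} \<noteq> {}"
      then obtain T where T: "T \<in> F.TT" "P T" by blast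
      have "\<forall>j\<in>I. T j \<subseteq> U" using T(1) unfolding F.TT_def PiE_dflt_def by blast
      then have "\<forall>j\<in>I. finite (T j)" using F.fU finite_subset by blast
      then have "finite (\<Union>(T ` I))" using F.fI by blast
      moreover have "finite (S 1)"
      proof -
        have "S 1 \<subseteq> U" using SU M1 by auto
        then show ?thesis using F.fU finite_subset by blast
      qed
      ultimately have "card (S 1) \<le> card (S 1 \<union> \<Union>(T ` I))" by (simp add: card_mono)
      then show False using T False SU M1 by (auto simp: P_def)
    qed
    moreover have "E = 0"
    proof -
      have "Emats M x lam B = {}"
      proof (rule ccontr)
        assume "Emats M x lam B \<noteq> {}"
        then obtain Em where Em: "Em \<in> Emats M x lam B" by blast
        then have "(\<Sum>j=1..x. Em 1 j) = lam 1" using M1 by (auto simp: Emats_def)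
        moreover have "(\<Sum>j=1..x. Em 1 j) \<le> (\<Sum>j=1..x. 1)"
        proof (rule sum_mono)
          fix j
          have "Em 1 j \<in> {0,1}" using Em by (simp add: Emats_def)
          then show "Em 1 j \<le> 1" by auto
        qed
        ultimately show False using False by simp
      qed
      then show ?thesis by (simp add: E_def)
    qed
    ultimately show ?thesis by (simp only: card.empty mult_0 mult_0_right)
  qed
  have pos: "\<And>j. j \<in> {1..M} \<Longrightarrow> (k choose lam j) > 0" using lamk by simp
  have p1: "(\<Prod>j=1..M. k choose lam j) = (k choose lam 1) * (\<Prod>j=2..M. k choose lam j)"
    using M1 prod.atLeast_Suc_atMost[of 1 M "\<lambda>j. k choose lam j"] by (simp add: numeral_2_eq_2)
  have p2: "(\<Prod>j=1..M. k choose lam j) = (\<Prod>j=1..M-1. k choose lam j) * (k choose lam M)"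
  proof -
    obtain m where "M = Suc m" using M1 by (cases M) auto
    then show ?thesis by (simp add: prod.nat_ivl_Suc')
  qed
  define t where "t = (\<Prod>j=2..M. k choose lam j)"
  define q where "q = (\<Prod>j=1..M-1. k choose lam j)"
  define a where "a = card {T\<in>F.TT. P T}"
  have tpos: "t > 0" unfolding t_def using pos by (auto intro: prod_pos)
  have qpos: "q > 0" unfolding q_def using pos by (auto intro: prod_pos)
  have c1pos: "(k choose lam 1) > 0" "(k choose lam M) > 0" using pos M1 by auto
  have "a * q * ((k choose lam 1) * (k choose lam M)) = C' * E * t * ((k choose lam 1) * (k choose lam M))"
  proof -
    have "a * q * ((k choose lam 1) * (k choose lam M)) = (a * (k choose lam 1)) * (q * (k choose lam M))"
      by (simp add: mult_ac)
    also have "\<dots> = (k choose lam M) * C' * E * ((k choose lam 1) * t)"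
      using core p1 p2 by (simp add: a_def q_def t_def)
    also have "\<dots> = C' * E * t * ((k choose lam 1) * (k choose lam M))" by (simp add: mult_ac)
    finally show ?thesis .
  qed
  then have eq: "a * q = C' * E * t" using c1pos by simp
  have rq: "(\<Prod>j=1..M-1. real (k choose lam j)) = real q" by (simp add: q_def)
  have pa: "prob_numC k M S x = real a / real t" using pr2 cTT by (simp add: a_def t_def)
  have eqr: "real a * real q = real C' * real E * real t" using eq by (simp flip: of_nat_mult)
  have "real a / real t = real C' * real E / real q"
    by (subst frac_eq_eq) (use tpos qpos eqr in auto)
  then show ?thesis unfolding pa rq E_def C'_def .
qed


end
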